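(* For every natural number $n\geq 2$, the $n$-Split Interval $S_n(I)$ is a Rosenthal compactum which is premetric of degree at most $n$ but is not premetric of degree at most $n-1$.
   Context: A Rosenthal compactum is a topological space homeomorphic to a compact subset of $\mathcal{B}_1(\mathbb{N}^{\mathbb{N}})$, the space of first Baire class real functions on $\mathbb{N}^{\mathbb{N}}$ with the pointwise topology. A compact space $K$ is premetric of degree at most $m$ if there is a continuous surjection $f:K\to M$ onto a metrizable compact space $M$ with $|f^{-1}(x)|\leq m$ for all $x\in M$. Let $I=[0,1]$. For $n\geq 2$, $S_n(I)$ is the set $I\times\{0,\ldots,n-1\}$ with the topology in which the points $(x,i)$ with $i\in\{2,\ldots,n-1\}$ are isolated, a point $(x,0)$ with $x>0$ has basic neighbourhoods $\{(x,0)\}\cup\{(y,i): z_0<y<x,\ i\in\{0,\ldots,n-1\}\}$ for $z_0\in I$, $z_0<x$, a point $(x,1)$ with $x<1$ has basic neighbourhoods $\{(x,1)\}\cup\{(y,i): x<y<z_1,\ i\in\{0,\ldots,n-1\}\}$ for $z_1\in I$, $z_1>x$, and the points $(0,0)$ and $(1,1)$ are isolated. *)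

theory Defs
  imports "HOL-Analysis.Analysis"
begin

definition baire_space :: "(nat \<Rightarrow> nat) topology" where
  "baire_space = product_topology (\<lambda>_. discrete_topology (UNIV :: nat set)) UNIV"

definition baire_one :: "((nat \<Rightarrow> nat) \<Rightarrow> real) set" where
  "baire_one = {f. \<exists>g :: nat \<Rightarrow> (nat \<Rightarrow> nat) \<Rightarrow> real.
      (\<forall>k. continuous_map baire_space euclideanreal (g k)) \<and>
      (\<forall>x. (\<lambda>k. g k x) \<longlonglongrightarrow> f x)}"

definition pointwise_top :: "((nat \<Rightarrow> nat) \<Rightarrow> real) topology" where
  "pointwise_top = product_topology (\<lambda>_. euclideanreal) UNIV"

definition rosenthal_compactum :: "'a topology \<Rightarrow> bool" where
  "rosenthal_compactum X \<longleftrightarrow>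
     (\<exists>K. K \<subseteq> baire_one \<and> compactin pointwise_top K \<and>
          X homeomorphic_space subtopology pointwise_top K)"

definition premetric_degree_le :: "'a topology \<Rightarrow> nat \<Rightarrow> 'b itself \<Rightarrow> bool" where
  "premetric_degree_le K m (_ :: 'b itself) \<longleftrightarrow>
     (\<exists>(M :: 'b topology) f.
        metrizable_space M \<and> compact_space M \<and>
        continuous_map K M f \<and> f ` topspace K = topspace M \<and>
        (\<forall>y \<in> topspace M. finite {x \<in> topspace K. f x = y} \<and>
                           card {x \<in> topspace K. f x = y} \<le> m))"

definition split_carrier :: "nat \<Rightarrow> (real \<times> nat) set" where
  "split_carrier n = {0..1} \<times> {0..<n}"

definition split_nbhds :: "nat \<Rightarrow> real \<times> nat \<Rightarrow> (real \<times> nat) set set" where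
  "split_nbhds n p =
     (case p of (x, i) \<Rightarrow>
        if i = 0 \<and> x > 0 then
          {{(x, 0)} \<union> {(y, j). z0 < y \<and> y < x \<and> j < n} | z0. z0 \<in> {0..1} \<and> z0 < x}
        else if i = 1 \<and> x < 1 then
          {{(x, 1)} \<union> {(y, j). x < y \<and> y < z1 \<and> j < n} | z1. z1 \<in> {0..1} \<and> z1 > x}
        else {{(x, i)}})"

definition split_interval :: "nat \<Rightarrow> (real \<times> nat) topology" where
  "split_interval n = topology (\<lambda>U. U \<subseteq> split_carrier n \<and>
       (\<forall>p \<in> U. \<exists>B \<in> split_nbhds n p. B \<subseteq> U))"

end

theory Submission imports Defs begin

definition nb0 :: "nat \<Rightarrow> real \<Rightarrow> real \<Rightarrow> (real \<times> nat) set" where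
  "nb0 n x z = {(x,0)} \<union> {(y,j). z < y \<and> y < x \<and> j < n}"
definition nb1 :: "nat \<Rightarrow> real \<Rightarrow> real \<Rightarrow> (real \<times> nat) set" where
  "nb1 n x z = {(x,1)} \<union> {(y,j). x < y \<and> y < z \<and> j < n}"

lemma carrier_iff [simp]: "(x,i) \<in> split_carrier n \<longleftrightarrow> 0 \<le> x \<and> x \<le> 1 \<and> i < n"
  by (auto simp: split_carrier_def)

lemma nbhds_eq: "split_nbhds n (x,i) =
   (if i = 0 \<and> x > 0 then {nb0 n x z | z. z \<in> {0..1} \<and> z < x}
    else if i = 1 \<and> x < 1 then {nb1 n x z | z. z \<in> {0..1} \<and> z > x}
    else {{(x,i)}})"
  unfolding split_nbhds_def nb0_def nb1_def by simp

lemma nb0_mono: "z \<le> z' \<Longrightarrow> nb0 n x z' \<subseteq> nb0 n x z"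
  unfolding nb0_def by auto
lemma nb1_mono: "z' \<le> z \<Longrightarrow> nb1 n x z' \<subseteq> nb1 n x z"
  unfolding nb1_def by auto

lemma istop: "istopology (\<lambda>U. U \<subseteq> split_carrier n \<and> (\<forall>p\<in>U. \<exists>B\<in>split_nbhds n p. B \<subseteq> U))"
  unfolding istopology_def
proof (rule conjI; intro allI impI)
  fix S T :: "(real \<times> nat) set"
  assume S: "S \<subseteq> split_carrier n \<and> (\<forall>p\<in>S. \<exists>B\<in>split_nbhds n p. B \<subseteq> S)"
     and T: "T \<subseteq> split_carrier n \<and> (\<forall>p\<in>T. \<exists>B\<in>split_nbhds n p. B \<subseteq> T)"
  show "S \<inter> T \<subseteq> split_carrier n \<and> (\<forall>p\<in>S \<inter> T. \<exists>B\<in>split_nbhds n p. B \<subseteq> S \<inter> T)"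
  proof (intro conjI ballI)
    show "S \<inter> T \<subseteq> split_carrier n" using S by blast
    fix p assume p: "p \<in> S \<inter> T"
    obtain x i where pe: "p = (x,i)" by (cases p)
    obtain B1 where B1: "B1 \<in> split_nbhds n p" "B1 \<subseteq> S" using S p by blast
    obtain B2 where B2: "B2 \<in> split_nbhds n p" "B2 \<subseteq> T" using T p by blast
    consider (a) "i = 0 \<and> x > 0" | (b) "\<not>(i = 0 \<and> x > 0)" "i = 1 \<and> x < 1"
      | (c) "\<not>(i = 0 \<and> x > 0)" "\<not>(i = 1 \<and> x < 1)" by blast
    then show "\<exists>B\<in>split_nbhds n p. B \<subseteq> S \<inter> T"
    proof cases
      case a
      obtain z1 where z1: "B1 = nb0 n x z1" "z1 \<in> {0..1}" "z1 < x" using B1 a pe nbhds_eq by auto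
      obtain z2 where z2: "B2 = nb0 n x z2" "z2 \<in> {0..1}" "z2 < x" using B2 a pe nbhds_eq by auto
      have "nb0 n x (max z1 z2) \<in> split_nbhds n p" using a pe z1 z2 nbhds_eq
        by (auto intro!: exI[of _ "max z1 z2"])
      moreover have "nb0 n x (max z1 z2) \<subseteq> S \<inter> T"
        using nb0_mono[of z1 "max z1 z2" n x] nb0_mono[of z2 "max z1 z2" n x] z1 z2 B1 B2 by auto
      ultimately show ?thesis by blast
    next
      case b
      obtain z1 where z1: "B1 = nb1 n x z1" "z1 \<in> {0..1}" "z1 > x" using B1 b pe nbhds_eq by auto
      obtain z2 where z2: "B2 = nb1 n x z2" "z2 \<in> {0..1}" "z2 > x" using B2 b pe nbhds_eq by auto
      have "nb1 n x (min z1 z2) \<in> split_nbhds n p" using b pe z1 z2 nbhds_eq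
        by (auto intro!: exI[of _ "min z1 z2"])
      moreover have "nb1 n x (min z1 z2) \<subseteq> S \<inter> T"
        using nb1_mono[of "min z1 z2" z1 n x] nb1_mono[of "min z1 z2" z2 n x] z1 z2 B1 B2 by auto
      ultimately show ?thesis by blast
    next
      case c
      then have "B1 = {(x,i)}" "B2 = {(x,i)}" using B1 B2 pe nbhds_eq by auto
      then show ?thesis using B1 B2 by auto
    qed
  qed
next
  fix K :: "(real \<times> nat) set set"
  assume "\<forall>K\<in>K. K \<subseteq> split_carrier n \<and> (\<forall>p\<in>K. \<exists>B\<in>split_nbhds n p. B \<subseteq> K)"
  then have H: "\<And>K0. K0 \<in> K \<Longrightarrow> K0 \<subseteq> split_carrier n \<and> (\<forall>p\<in>K0. \<exists>B\<in>split_nbhds n p. B \<subseteq> K0)"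
    by blast
  show "\<Union>K \<subseteq> split_carrier n \<and> (\<forall>p\<in>\<Union>K. \<exists>B\<in>split_nbhds n p. B \<subseteq> \<Union>K)"
  proof (intro conjI ballI)
    show "\<Union>K \<subseteq> split_carrier n" using H by blast
    fix p assume "p \<in> \<Union>K"
    then obtain K0 where K0: "K0 \<in> K" "p \<in> K0" by blast
    then obtain B where "B \<in> split_nbhds n p" "B \<subseteq> K0" using H by blast
    then show "\<exists>B\<in>split_nbhds n p. B \<subseteq> \<Union>K" using K0 by blast
  qed
qed

lemma openin_split: "openin (split_interval n) U \<longleftrightarrow>
    U \<subseteq> split_carrier n \<and> (\<forall>p\<in>U. \<exists>B\<in>split_nbhds n p. B \<subseteq> U)"
  unfolding split_interval_def using istop by simp

lemma nbhd_sub: "p \<in> split_carrier n \<Longrightarrow> B \<in> split_nbhds n p \<Longrightarrow> B \<subseteq> split_carrier n"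
  apply (cases p)
  apply (auto simp: nbhds_eq nb0_def nb1_def split: if_splits)
  done

lemma nbhd_mem: "B \<in> split_nbhds n p \<Longrightarrow> p \<in> B"
  apply (cases p)
  apply (auto simp: nbhds_eq nb0_def nb1_def split: if_splits)
  done

lemma nbhd_ex: "\<exists>B. B \<in> split_nbhds n p"
proof (cases p)
  case (Pair x i)
  consider "i = 0 \<and> x > 0" | "\<not>(i = 0 \<and> x > 0)" "i = 1 \<and> x < 1"
      | "\<not>(i = 0 \<and> x > 0)" "\<not>(i = 1 \<and> x < 1)" by blast
  then show ?thesis
  proof cases
    case 1
    then have e: "split_nbhds n p = {nb0 n x z | z. z \<in> {0..1} \<and> z < x}" by (simp add: Pair nbhds_eq)
    have "nb0 n x 0 \<in> {nb0 n x z | z. z \<in> {0..1} \<and> z < x}" using 1 by auto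
    then show ?thesis unfolding e by blast
  next
    case 2
    then have e: "split_nbhds n p = {nb1 n x z | z. z \<in> {0..1} \<and> z > x}" by (simp add: Pair nbhds_eq)
    have "nb1 n x 1 \<in> {nb1 n x z | z. z \<in> {0..1} \<and> z > x}" using 2 by auto
    then show ?thesis unfolding e by blast
  next
    case 3
    have e: "split_nbhds n p = {{(x,i)}}" unfolding Pair nbhds_eq using 3 by (simp only: if_False if_not_P)
    then show ?thesis by blast
  qed
qed

lemma topspace_split [simp]: "topspace (split_interval n) = split_carrier n"
proof -
  have "openin (split_interval n) (split_carrier n)"
    unfolding openin_split
  proof (intro conjI ballI)
    fix p assume p: "p \<in> split_carrier n"
    obtain B where B: "B \<in> split_nbhds n p" using nbhd_ex by blast
    show "\<exists>B\<in>split_nbhds n p. B \<subseteq> split_carrier n" using B nbhd_sub[OF p B] by blast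
  qed simp
  then have "split_carrier n \<subseteq> topspace (split_interval n)" by (rule openin_subset)
  moreover have "topspace (split_interval n) \<subseteq> split_carrier n"
    using openin_topspace[of "split_interval n"] unfolding openin_split by blast
  ultimately show ?thesis by blast
qed

lemma open0: assumes "openin (split_interval n) U" "(x,0) \<in> U" "x > 0"
  shows "\<exists>z. 0 \<le> z \<and> z < x \<and> nb0 n x z \<subseteq> U"
proof -
  obtain B where B: "B \<in> split_nbhds n (x,0)" "B \<subseteq> U" using assms(1,2) unfolding openin_split by blast
  then obtain z where "B = nb0 n x z" "z \<in> {0..1}" "z < x" using assms(3) unfolding nbhds_eq by auto
  then show ?thesis using B(2) by auto
qed

lemma open1: assumes "openin (split_interval n) U" "(x,1) \<in> U" "x < 1"
  shows "\<exists>z. z \<le> 1 \<and> x < z \<and> nb1 n x z \<subseteq> U"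
proof -
  obtain B where B: "B \<in> split_nbhds n (x,1)" "B \<subseteq> U" using assms(1,2) unfolding openin_split by blast
  then obtain z where "B = nb1 n x z" "z \<in> {0..1}" "z > x" using assms(3) unfolding nbhds_eq by auto
  then show ?thesis using B(2) by auto
qed

lemma loc_const_cont:
  assumes "\<And>p. p \<in> split_carrier n \<Longrightarrow> \<exists>B\<in>split_nbhds n p. \<forall>q\<in>B. g q = g p"
  shows "continuous_map (split_interval n) euclideanreal g"
  unfolding continuous_map
proof (intro conjI allI impI)
  fix V :: "real set" assume "openin euclideanreal V"
  show "openin (split_interval n) {x \<in> topspace (split_interval n). g x \<in> V}"
    unfolding openin_split topspace_split
  proof (intro conjI ballI)
    fix p assume p: "p \<in> {x \<in> split_carrier n. g x \<in> V}"
    then have pC: "p \<in> split_carrier n" and gp: "g p \<in> V" by auto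
    obtain B where B: "B \<in> split_nbhds n p" "\<forall>q\<in>B. g q = g p" using assms[OF pC] by blast
    have BC: "B \<subseteq> split_carrier n" using nbhd_sub[OF pC B(1)] .
    have "B \<subseteq> {x \<in> split_carrier n. g x \<in> V}"
    proof
      fix q assume "q \<in> B" then show "q \<in> {x \<in> split_carrier n. g x \<in> V}" using BC B(2) gp by auto
    qed
    then show "\<exists>B\<in>split_nbhds n p. B \<subseteq> {x \<in> split_carrier n. g x \<in> V}" using B(1) by blast
  qed blast
qed simp


lemma not_premetric:
  assumes n2: "n \<ge> 2"
  shows "\<not> premetric_degree_le (split_interval n) (n - 1) TYPE('b)"
proof
  assume "premetric_degree_le (split_interval n) (n - 1) TYPE('b)"
  then obtain M :: "'b topology" and f where
    met: "metrizable_space M" and cont: "continuous_map (split_interval n) M f"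
    and fib: "\<forall>y \<in> topspace M. finite {x \<in> split_carrier n. f x = y} \<and>
                           card {x \<in> split_carrier n. f x = y} \<le> n - 1"
    unfolding premetric_degree_le_def topspace_split by blast
  from met obtain MM d where ms: "Metric_space MM d" and Me: "M = Metric_space.mtopology MM d"
    unfolding metrizable_space_def by blast
  interpret ms: Metric_space MM d by (rule ms)
  have fM: "f p \<in> MM" if "p \<in> split_carrier n" for p
  proof -
    have "f p \<in> topspace M" using continuous_map_image_subset_topspace[OF cont] that by auto
    then show ?thesis unfolding Me by simp
  qed
  have opn: "openin (split_interval n) {p \<in> split_carrier n. f p \<in> ms.mball q r}" for q r
  proof -
    have "openin M (ms.mball q r)" unfolding Me by (rule ms.openin_mball)
    from openin_continuous_map_preimage[OF cont this] show ?thesis by (simp only: topspace_split)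
  qed
  have ex: "\<exists>a b k. a < n \<and> b < n \<and> 1 / real (Suc k) < d (f (y,a)) (f (y,b))"
    if y: "y \<in> {0..1}" for y :: real
  proof -
    have "\<exists>a<n. \<exists>b<n. f (y,a) \<noteq> f (y,b)"
    proof (rule ccontr)
      assume neg: "\<not> (\<exists>a<n. \<exists>b<n. f (y,a) \<noteq> f (y,b))"
      have n0: "0 < n" using n2 by simp
      have eq: "f (y,a) = f (y,0)" if "a < n" for a using neg that n0 by blast
      let ?F = "{x \<in> split_carrier n. f x = f (y,0)}"
      have y0: "(y,0) \<in> split_carrier n" using y n0 by simp
      have "f (y,0) \<in> MM" by (rule fM[OF y0])
      then have "f (y,0) \<in> topspace M" unfolding Me by simp
      then have F: "finite ?F" "card ?F \<le> n - 1" using fib by blast+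
      have sub: "(\<lambda>i. (y,i)) ` {..<n} \<subseteq> ?F"
      proof
        fix p assume "p \<in> (\<lambda>i. (y,i)) ` {..<n}"
        then obtain i where i: "i < n" "p = (y,i)" by blast
        then show "p \<in> ?F" using eq[OF i(1)] y by simp
      qed
      have "card ((\<lambda>i. (y,i)) ` {..<n}) = n" by (simp add: card_image inj_on_def)
      then have "n \<le> card ?F" using card_mono[OF F(1) sub] by simp
      then show False using F(2) n2 by simp
    qed
    then obtain a b where ab: "a < n" "b < n" "f (y,a) \<noteq> f (y,b)" by blast
    have "0 < d (f (y,a)) (f (y,b))" using ab y fM by (intro ms.mdist_pos_less) auto
    then obtain k where "inverse (real (Suc k)) < d (f (y,a)) (f (y,b))"
      using reals_Archimedean by blast
    then show ?thesis using ab by (auto simp: divide_inverse)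
  qed
  define S where "S = (\<lambda>(a,b,k). {y \<in> {0..1::real}. a < n \<and> b < n \<and> 1 / real (Suc k) < d (f (y,a)) (f (y,b))})"
  have "\<exists>t. infinite (S t)"
  proof (rule ccontr)
    assume "\<not> (\<exists>t. infinite (S t))"
    then have fin: "\<And>t. finite (S t)" by blast
    have "{0..1::real} \<subseteq> (\<Union>t. S t)"
    proof
      fix y :: real assume y: "y \<in> {0..1}"
      obtain a b k where "a < n \<and> b < n \<and> 1 / real (Suc k) < d (f (y,a)) (f (y,b))"
        using ex[OF y] by blast
      then have "y \<in> S (a,b,k)" using y unfolding S_def by simp
      then show "y \<in> (\<Union>t. S t)" by blast
    qed
    moreover have "countable (\<Union>t. S t)"
      by (rule countable_UN) (auto intro: countable_finite fin)
    ultimately have "countable {0..1::real}" using countable_subset by blast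
    then show False using uncountable_closed_interval[of "0::real" 1] by simp
  qed
  then obtain a b k where inf: "infinite (S (a,b,k))" by (metis prod_cases3)
  define T where "T = S (a,b,k)"
  define \<epsilon> where "\<epsilon> = 1 / real (Suc k)"
  have epos: "\<epsilon> > 0" unfolding \<epsilon>_def by simp
  have Tsub: "T \<subseteq> {0..1}" unfolding T_def S_def by auto
  have Tkey: "\<And>y. y \<in> T \<Longrightarrow> \<epsilon> < d (f (y,a)) (f (y,b))" unfolding T_def S_def \<epsilon>_def by auto
  have "T \<noteq> {}" using inf T_def by auto
  then have ab: "a < n" "b < n" unfolding T_def S_def by auto
  obtain x where x: "x \<in> {0..1}" "x islimpt T"
    using compact_eq_Bolzano_Weierstrass[of "{0..1::real}"] inf Tsub T_def by auto
  have close: False if "y \<in> T" "B \<subseteq> {p \<in> split_carrier n. f p \<in> ms.mball q (\<epsilon>/2)}"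
     "(y,a) \<in> B" "(y,b) \<in> B" for B q y
  proof -
    have "(y,a) \<in> {p \<in> split_carrier n. f p \<in> ms.mball q (\<epsilon>/2)}" using that by blast
    then have 1: "d q (f (y,a)) < \<epsilon>/2" "q \<in> MM" "f (y,a) \<in> MM" by auto
    have "(y,b) \<in> {p \<in> split_carrier n. f p \<in> ms.mball q (\<epsilon>/2)}" using that by blast
    then have 2: "d q (f (y,b)) < \<epsilon>/2" "f (y,b) \<in> MM" by auto
    have "d (f (y,a)) (f (y,b)) \<le> d (f (y,a)) q + d q (f (y,b))"
      using 1 2 ms.triangle by blast
    also have "\<dots> = d q (f (y,a)) + d q (f (y,b))" using ms.commute by simp
    also have "\<dots> < \<epsilon>" using 1 2 by simp
    finally show False using Tkey[OF that(1)] by simp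
  qed
  show False
  proof (cases "\<forall>e>0. \<exists>y\<in>T. x - e < y \<and> y < x")
    case True
    then obtain y0 where "y0 \<in> T" "y0 < x" by (meson zero_less_one)
    then have xpos: "x > 0" using Tsub by force
    have x0: "(x,0) \<in> split_carrier n" using x n2 by auto
    define q where "q = f (x,0)"
    have qM: "q \<in> MM" using fM[OF x0] q_def by simp
    have "(x,0) \<in> {p \<in> split_carrier n. f p \<in> ms.mball q (\<epsilon>/2)}" using x0 qM epos q_def by simp
    then obtain z where z: "0 \<le> z" "z < x" "nb0 n x z \<subseteq> {p \<in> split_carrier n. f p \<in> ms.mball q (\<epsilon>/2)}"
      using open0[OF opn _ xpos] by blast
    obtain y where y: "y \<in> T" "z < y" "y < x" using True[rule_format, of "x - z"] z by auto
    have "(y,a) \<in> nb0 n x z" "(y,b) \<in> nb0 n x z" using y ab unfolding nb0_def by auto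
    then show False using close[OF y(1) z(3)] by blast
  next
    case False
    then obtain e0 where e0: "e0 > 0" "\<forall>y\<in>T. \<not> (x - e0 < y \<and> y < x)" by auto
    have right: "\<exists>y\<in>T. x < y \<and> y < x + e" if e: "e > 0" for e
    proof -
      obtain y where y: "y \<in> T" "y \<noteq> x" "dist y x < min e e0"
        using x(2) e e0(1) unfolding islimpt_approachable by (meson min_less_iff_conj)
      then have "\<not> y < x" using e0(2) by (auto simp: dist_real_def)
      then have "x < y" "y < x + e" using y by (auto simp: dist_real_def)
      then show ?thesis using y(1) by blast
    qed
    obtain y0 where "y0 \<in> T" "x < y0" using right[of 1] by auto
    then have xlt: "x < 1" using Tsub by force
    have x1: "(x,1) \<in> split_carrier n" using x n2 by auto
    define q where "q = f (x,1)"
    have qM: "q \<in> MM" using fM[OF x1] q_def by simp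
    have "(x,1) \<in> {p \<in> split_carrier n. f p \<in> ms.mball q (\<epsilon>/2)}" using x1 qM epos q_def by simp
    then obtain z where z: "z \<le> 1" "x < z" "nb1 n x z \<subseteq> {p \<in> split_carrier n. f p \<in> ms.mball q (\<epsilon>/2)}"
      using open1[OF opn _ xlt] by blast
    obtain y where y: "y \<in> T" "x < y" "y < z" using right[of "z - x"] z by auto
    have "(y,a) \<in> nb1 n x z" "(y,b) \<in> nb1 n x z" using y ab unfolding nb1_def by auto
    then show False using close[OF y(1) z(3)] by blast
  qed
qed


lemma cont_real_split:
  assumes "\<And>p e. p \<in> split_carrier n \<Longrightarrow> e > 0 \<Longrightarrow> \<exists>B\<in>split_nbhds n p. \<forall>q\<in>B. \<bar>g q - g p\<bar> < e"
  shows "continuous_map (split_interval n) euclideanreal g"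
  unfolding continuous_map
proof (intro conjI allI impI)
  fix V :: "real set" assume "openin euclideanreal V"
  then have oV: "open V" by simp
  show "openin (split_interval n) {x \<in> topspace (split_interval n). g x \<in> V}"
    unfolding openin_split topspace_split
  proof (intro conjI ballI)
    fix p assume p: "p \<in> {x \<in> split_carrier n. g x \<in> V}"
    then have pC: "p \<in> split_carrier n" and gp: "g p \<in> V" by auto
    obtain e where e: "e > 0" "\<And>y. dist y (g p) < e \<Longrightarrow> y \<in> V"
      using oV gp unfolding open_dist by blast
    obtain B where B: "B \<in> split_nbhds n p" "\<forall>q\<in>B. \<bar>g q - g p\<bar> < e" using assms[OF pC e(1)] by blast
    have BC: "B \<subseteq> split_carrier n" using nbhd_sub[OF pC B(1)] .
    have "B \<subseteq> {x \<in> split_carrier n. g x \<in> V}"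
    proof
      fix q assume q: "q \<in> B"
      then have "dist (g q) (g p) < e" using B(2) by (simp add: dist_real_def)
      then show "q \<in> {x \<in> split_carrier n. g x \<in> V}" using BC q e(2) by auto
    qed
    then show "\<exists>B\<in>split_nbhds n p. B \<subseteq> {x \<in> split_carrier n. g x \<in> V}" using B(1) by blast
  qed blast
qed simp

lemma nb0_in: "0 < x \<Longrightarrow> x \<le> 1 \<Longrightarrow> 0 \<le> z \<Longrightarrow> z < x \<Longrightarrow> nb0 n x z \<in> split_nbhds n (x,0)"
  unfolding nbhds_eq by (auto intro!: exI[of _ z])

lemma nb1_in: "x < 1 \<Longrightarrow> 0 \<le> x \<Longrightarrow> z \<le> 1 \<Longrightarrow> x < z \<Longrightarrow> nb1 n x z \<in> split_nbhds n (x,1)"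
  unfolding nbhds_eq by (auto intro!: exI[of _ z])

lemma cont_fst: "continuous_map (split_interval n) euclideanreal fst"
proof (rule cont_real_split)
  fix p :: "real \<times> nat" and e :: real
  assume pC: "p \<in> split_carrier n" and e: "e > 0"
  obtain x i where pe: "p = (x,i)" by (cases p)
  consider "i = 0 \<and> x > 0" | "\<not>(i = 0 \<and> x > 0)" "i = 1 \<and> x < 1"
      | "\<not>(i = 0 \<and> x > 0)" "\<not>(i = 1 \<and> x < 1)" by blast
  then show "\<exists>B\<in>split_nbhds n p. \<forall>q\<in>B. \<bar>fst q - fst p\<bar> < e"
  proof cases
    case 1
    define z where "z = max 0 (x - e/2)"
    have pe0: "p = (x,0)" using pe 1 by simp
    have "nb0 n x z \<in> split_nbhds n p" unfolding pe0 using 1 e pC pe by (intro nb0_in) (auto simp: z_def)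
    moreover have "\<forall>q\<in>nb0 n x z. \<bar>fst q - fst p\<bar> < e"
      unfolding nb0_def z_def pe using e by auto
    ultimately show ?thesis by blast
  next
    case 2
    define z where "z = min 1 (x + e/2)"
    have pe1: "p = (x,1)" using pe 2 by simp
    have "nb1 n x z \<in> split_nbhds n p" unfolding pe1 using 2 e pC pe by (intro nb1_in) (auto simp: z_def)
    moreover have "\<forall>q\<in>nb1 n x z. \<bar>fst q - fst p\<bar> < e"
      unfolding nb1_def z_def pe using e by auto
    ultimately show ?thesis by blast
  next
    case 3
    have e: "split_nbhds n p = {{(x,i)}}" unfolding pe nbhds_eq using 3 by (simp only: if_False if_not_P)
    show ?thesis unfolding e using pe \<open>e > 0\<close> by simp
  qed
qed

lemma premetric_n:
  assumes n1: "n \<ge> 1"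
  shows "premetric_degree_le (split_interval n) n TYPE(real)"
  unfolding premetric_degree_le_def
proof (intro exI conjI)
  show "metrizable_space (subtopology euclideanreal {0..1})"
    by (rule metrizable_space_subtopology[OF metrizable_space_euclidean])
  show "compact_space (subtopology euclideanreal {0..1::real})"
    by (rule compact_space_subtopology) simp
  have img: "fst ` topspace (split_interval n) = {0..1}"
  proof
    show "fst ` topspace (split_interval n) \<subseteq> {0..1}" by auto
    show "{0..1} \<subseteq> fst ` topspace (split_interval n)"
    proof
      fix y :: real assume "y \<in> {0..1}"
      then have "(y,0) \<in> topspace (split_interval n)" using n1 by simp
      then show "y \<in> fst ` topspace (split_interval n)" by (metis fst_conv image_eqI)
    qed
  qed
  then show "fst ` topspace (split_interval n) = topspace (subtopology euclideanreal {0..1})"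
    by simp
  show "continuous_map (split_interval n) (subtopology euclideanreal {0..1}) fst"
    unfolding continuous_map_in_subtopology using cont_fst img by blast
  show "\<forall>y\<in>topspace (subtopology euclideanreal {0..1}).
       finite {x \<in> topspace (split_interval n). fst x = y} \<and> card {x \<in> topspace (split_interval n). fst x = y} \<le> n"
  proof
    fix y :: real assume "y \<in> topspace (subtopology euclideanreal {0..1})"
    then have y: "y \<in> {0..1}" by simp
    have e: "{x \<in> topspace (split_interval n). fst x = y} = (\<lambda>i. (y,i)) ` {..<n}"
      using y by auto
    have "card ((\<lambda>i. (y,i)) ` {..<n}) = n" by (simp add: card_image inj_on_def)
    then show "finite {x \<in> topspace (split_interval n). fst x = y} \<and> card {x \<in> topspace (split_interval n). fst x = y} \<le> n"
      unfolding e by simp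
  qed
qed


lemma compact_split:
  assumes n2: "n \<ge> 2"
  shows "compact_space (split_interval n)"
  unfolding compact_space_alt topspace_split
proof (intro allI impI)
  fix \<U> :: "(real \<times> nat) set set"
  assume A: "(\<forall>U\<in>\<U>. openin (split_interval n) U) \<and> split_carrier n \<subseteq> \<Union>\<U>"
  have Uo: "openin (split_interval n) U" if "U \<in> \<U>" for U using conjunct1[OF A] that by (rule bspec)
  have Ucov: "\<exists>U\<in>\<U>. p \<in> U" if "p \<in> split_carrier n" for p
  proof -
    have "split_carrier n \<subseteq> \<Union>\<U>" using A by (rule conjunct2)
    then have "p \<in> \<Union>\<U>" using that by (rule subsetD)
    then show ?thesis by (simp only: Union_iff)
  qed
  define fc where "fc A \<longleftrightarrow> (\<exists>F. finite F \<and> F \<subseteq> \<U> \<and> A \<subseteq> \<Union>F)" for A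
  have fc_un: "fc (A \<union> B)" if "fc A" "fc B" for A B
  proof -
    have "\<exists>F. finite F \<and> F \<subseteq> \<U> \<and> A \<subseteq> \<Union>F" using that(1) by (simp only: fc_def)
    then obtain F1 where F1: "finite F1" "F1 \<subseteq> \<U>" "A \<subseteq> \<Union>F1" by blast
    have "\<exists>F. finite F \<and> F \<subseteq> \<U> \<and> B \<subseteq> \<Union>F" using that(2) by (simp only: fc_def)
    then obtain F2 where F2: "finite F2" "F2 \<subseteq> \<U>" "B \<subseteq> \<Union>F2" by blast
    have 1: "finite (F1 \<union> F2)" using F1(1) F2(1) by simp
    have 2: "F1 \<union> F2 \<subseteq> \<U>" using F1(2) F2(2) by simp
    have 3: "A \<union> B \<subseteq> \<Union>(F1 \<union> F2)" unfolding Union_Un_distrib using F1(3) F2(3) by (rule Un_mono)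
    show ?thesis unfolding fc_def by (rule exI[of _ "F1 \<union> F2"]) (intro conjI 1 2 3)
  qed
  have fc_sub: "fc A" if "A \<subseteq> B" "fc B" for A B
  proof -
    have "\<exists>F. finite F \<and> F \<subseteq> \<U> \<and> B \<subseteq> \<Union>F" using that(2) by (simp only: fc_def)
    then obtain F where F: "finite F" "F \<subseteq> \<U>" "B \<subseteq> \<Union>F" by blast
    have 3: "A \<subseteq> \<Union>F" using that(1) F(3) by (rule subset_trans)
    show ?thesis unfolding fc_def by (rule exI[of _ F]) (intro conjI F(1) F(2) 3)
  qed
  have fc_U: "fc A" if "U \<in> \<U>" "A \<subseteq> U" for A U
  proof -
    have 1: "finite {U}" and 2: "{U} \<subseteq> \<U>" and 3: "A \<subseteq> \<Union>{U}" using that by auto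
    show ?thesis unfolding fc_def by (rule exI[of _ "{U}"]) (intro conjI 1 2 3)
  qed
  have fc_pt: "fc {p}" if pC: "p \<in> split_carrier n" for p
  proof -
    obtain U where "U \<in> \<U>" "p \<in> U" using Ucov[OF pC] by blast
    then show ?thesis using fc_U[of U "{p}"] by simp
  qed
  have fc_fin: "finite A \<Longrightarrow> A \<subseteq> split_carrier n \<Longrightarrow> fc A" for A
  proof (induction A rule: finite_induct)
    case empty
    show ?case unfolding fc_def by (rule exI[of _ "{}"]) simp
  next
    case (insert p A)
    have p: "p \<in> split_carrier n" using insert.prems by simp
    have A: "A \<subseteq> split_carrier n" using insert.prems by simp
    have "fc ({p} \<union> A)" using fc_un[OF fc_pt[OF p] insert.IH[OF A]] .
    then show ?case by simp
  qed
  have fc_col: "fc ((\<lambda>i. (t,i)) ` {..<n})" if "t \<in> {0..1}" for t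
    using that by (intro fc_fin) auto
  define L where "L t = {(y,i). 0 \<le> y \<and> y < t \<and> i < n} \<union> {(t,0)}" for t :: real
  define T where "T = {t \<in> {0..1::real}. fc (L t)}"
  have L0: "L 0 = {(0,0)}" unfolding L_def by auto
  have "fc (L 0)" unfolding L0 using n2 by (intro fc_pt) simp
  then have T0: "0 \<in> T" unfolding T_def by simp
  have Tsub: "T \<subseteq> {0..1}" unfolding T_def by auto
  have Tne: "T \<noteq> {}" using T0 by blast
  have bdd: "bdd_above T" using Tsub by (meson bdd_above_Icc bdd_above_mono)
  define s where "s = Sup T"
  have s0: "0 \<le> s" unfolding s_def using cSup_upper[OF T0 bdd] .
  have s1: "s \<le> 1" unfolding s_def using Tsub Tne by (intro cSup_least) auto
  have fcs: "fc (L s)"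
  proof (cases "s = 0")
    case True
    then show ?thesis using \<open>fc (L 0)\<close> by simp
  next
    case False
    then have spos: "s > 0" using s0 by simp
    have sC: "(s,0) \<in> split_carrier n" using s0 s1 n2 by simp
    obtain U where U: "U \<in> \<U>" "(s,0) \<in> U" using Ucov[OF sC] by blast
    obtain z where z: "0 \<le> z" "z < s" "nb0 n s z \<subseteq> U" using open0[OF Uo[OF U(1)] U(2) spos] by blast
    obtain t where t: "t \<in> T" "z < t" using less_cSupD[OF Tne, of z] z(2) unfolding s_def by blast
    have ts: "t \<le> s" unfolding s_def using cSup_upper[OF t(1) bdd] .
    show ?thesis
    proof (cases "t = s")
      case True
      then show ?thesis using t(1) unfolding T_def by simp
    next
      case False
      then have ts': "t < s" using ts by simp
      have tI: "t \<in> {0..1}" using t(1) Tsub by blast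
      have "L s \<subseteq> L t \<union> (\<lambda>i. (t,i)) ` {..<n} \<union> nb0 n s z"
      proof
        fix p assume p: "p \<in> L s"
        obtain y i where pe: "p = (y,i)" by (cases p)
        show "p \<in> L t \<union> (\<lambda>i. (t,i)) ` {..<n} \<union> nb0 n s z"
        proof (cases "y < t")
          case True
          then show ?thesis using p pe ts' unfolding L_def by auto
        next
          case False
          show ?thesis
          proof (cases "y = t")
            case True
            have "i < n" using p pe True ts' n2 unfolding L_def by auto
            then show ?thesis using pe True by blast
          next
            case False
            then have "t < y" using \<open>\<not> y < t\<close> by simp
            then show ?thesis using p pe t(2) unfolding L_def nb0_def by auto
          qed
        qed
      qed
      moreover have "fc (L t \<union> (\<lambda>i. (t,i)) ` {..<n} \<union> nb0 n s z)"
        using t(1) fc_col[OF tI] fc_U[OF U(1) z(3)] fc_un unfolding T_def by simp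
      ultimately show ?thesis by (rule fc_sub)
    qed
  qed
  then have sT: "s \<in> T" using s0 s1 unfolding T_def by simp
  have s_eq: "s = 1"
  proof (rule ccontr)
    assume "s \<noteq> 1"
    then have slt: "s < 1" using s1 by simp
    have sC: "(s,1) \<in> split_carrier n" using s0 s1 n2 by simp
    obtain U where U: "U \<in> \<U>" "(s,1) \<in> U" using Ucov[OF sC] by blast
    obtain z where z: "z \<le> 1" "s < z" "nb1 n s z \<subseteq> U" using open1[OF Uo[OF U(1)] U(2) slt] by blast
    define t where "t = (s + z) / 2"
    have t: "s < t" "t < z" "t \<in> {0..1}" using z s0 unfolding t_def by auto
    have "L t \<subseteq> L s \<union> (\<lambda>i. (s,i)) ` {..<n} \<union> nb1 n s z"
    proof
      fix p assume p: "p \<in> L t"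
      obtain y i where pe: "p = (y,i)" by (cases p)
      show "p \<in> L s \<union> (\<lambda>i. (s,i)) ` {..<n} \<union> nb1 n s z"
      proof (cases "y < s")
        case True
        then show ?thesis using p pe t unfolding L_def by auto
      next
        case False
        show ?thesis
        proof (cases "y = s")
          case True
          have "i < n" using p pe True t n2 unfolding L_def by auto
          then show ?thesis using pe True by blast
        next
          case False
          then have "s < y" using \<open>\<not> y < s\<close> by simp
          then show ?thesis using p pe t n2 unfolding L_def nb1_def by auto
        qed
      qed
    qed
    moreover have "fc (L s \<union> (\<lambda>i. (s,i)) ` {..<n} \<union> nb1 n s z)"
      using fcs fc_col[of s] s0 s1 fc_U[OF U(1) z(3)] fc_un by simp
    ultimately have "fc (L t)" by (rule fc_sub)
    then have "t \<in> T" using t unfolding T_def by simp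
    then have "t \<le> s" unfolding s_def using cSup_upper[OF _ bdd] by blast
    then show False using t by simp
  qed
  have "split_carrier n \<subseteq> L 1 \<union> (\<lambda>i. (1,i)) ` {..<n}"
  proof
    fix p assume p: "p \<in> split_carrier n"
    obtain y i where pe: "p = (y,i)" by (cases p)
    show "p \<in> L 1 \<union> (\<lambda>i. (1,i)) ` {..<n}"
    proof (cases "y < 1")
      case True
      then show ?thesis using p pe unfolding L_def by auto
    next
      case False
      then have "y = 1" "i < n" using p pe by auto
      then show ?thesis using pe by blast
    qed
  qed
  moreover have "fc (L 1 \<union> (\<lambda>i. (1,i)) ` {..<n})"
    using fcs s_eq fc_col[of 1] fc_un by simp
  ultimately have "fc (split_carrier n)" by (rule fc_sub)
  then show "\<exists>\<F>. finite \<F> \<and> \<F> \<subseteq> \<U> \<and> split_carrier n \<subseteq> \<Union>\<F>" by (simp only: fc_def)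
qed


section \<open>Binary coding of [0,1] on the Baire space\<close>

definition bitv :: "nat \<Rightarrow> real" where "bitv m = (if m = 0 then 0 else 1)"
definition hterm :: "(nat \<Rightarrow> nat) \<Rightarrow> nat \<Rightarrow> real" where
  "hterm s j = bitv (s j) * (1/2)^(Suc j)"
definition hk :: "nat \<Rightarrow> (nat \<Rightarrow> nat) \<Rightarrow> real" where "hk k s = (\<Sum>j<k. hterm s j)"
definition hh :: "(nat \<Rightarrow> nat) \<Rightarrow> real" where "hh s = suminf (hterm s)"

lemma hterm_nonneg: "0 \<le> hterm s j" by (simp add: hterm_def bitv_def)
lemma hterm_le: "hterm s j \<le> (1/2)^(Suc j)" by (simp add: hterm_def bitv_def)

lemma summable_half: "summable (\<lambda>n. c * (1/2::real)^n)"
  by (rule summable_mult[OF summable_geometric]) simp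

lemma summable_hterm: "summable (hterm s)"
proof (rule summable_comparison_test)
  show "\<exists>N. \<forall>n\<ge>N. norm (hterm s n) \<le> (1/2) * (1/2)^n"
    using hterm_nonneg hterm_le by auto
  show "summable (\<lambda>n. (1/2::real) * (1/2)^n)" by (rule summable_half)
qed

lemma hk_le_hh: "hk k s \<le> hh s"
  unfolding hk_def hh_def by (rule sum_le_suminf[OF summable_hterm]) (auto simp: hterm_nonneg)

lemma hh_le: "hh s \<le> hk k s + (1/2)^k"
proof -
  have 1: "hh s = (\<Sum>n. hterm s (n+k)) + hk k s"
    unfolding hh_def hk_def by (rule suminf_split_initial_segment[OF summable_hterm])
  have 2: "(\<Sum>n. hterm s (n+k)) \<le> (\<Sum>n. (1/2::real)^(Suc k) * (1/2)^n)"
  proof (rule suminf_le)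
    fix n
    have "(1/2::real)^(Suc (n+k)) = (1/2)^(Suc k) * (1/2)^n"
      unfolding power_add[symmetric] by (simp add: add.commute)
    then show "hterm s (n+k) \<le> (1/2)^(Suc k) * (1/2)^n" using hterm_le[of s "n+k"] by simp
    show "summable (\<lambda>n. hterm s (n+k))" by (rule summable_ignore_initial_segment[OF summable_hterm])
    show "summable (\<lambda>n. (1/2::real)^(Suc k) * (1/2)^n)" by (rule summable_half)
  qed
  have 3: "(\<Sum>n. (1/2::real)^(Suc k) * (1/2)^n) = (1/2)^k"
  proof -
    have "(\<Sum>n. (1/2::real)^(Suc k) * (1/2)^n) = (1/2)^(Suc k) * (\<Sum>n. (1/2)^n)"
      by (rule suminf_mult[OF summable_geometric]) simp
    also have "(\<Sum>n. (1/2::real)^n) = 2" using suminf_geometric[of "1/2::real"] by simp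
    finally show ?thesis by simp
  qed
  show ?thesis using 1 2 3 by simp
qed

lemma hk_lim: "(\<lambda>k. hk k s) \<longlonglongrightarrow> hh s"
  unfolding hk_def hh_def by (rule summable_LIMSEQ[OF summable_hterm])

lemma hk_cont: "continuous_map baire_space euclideanreal (hk k)"
proof -
  have proj: "continuous_map baire_space (discrete_topology UNIV) (\<lambda>s. s j)" for j
    unfolding baire_space_def by (rule continuous_map_product_projection) simp
  have c: "continuous_map baire_space euclideanreal (\<lambda>s. hterm s j)" for j
  proof -
    have "continuous_map (discrete_topology (UNIV::nat set)) euclideanreal (\<lambda>m. bitv m * (1/2)^(Suc j))"
      by simp
    from continuous_map_compose[OF proj this] show ?thesis unfolding hterm_def o_def .
  qed
  have e: "hk k = (\<lambda>s. \<Sum>j<k. hterm s j)" by (rule ext) (simp add: hk_def)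
  show ?thesis unfolding e by (intro continuous_map_sum c) auto
qed

fun gp :: "real \<Rightarrow> nat \<Rightarrow> real" where
  "gp x 0 = 0"
| "gp x (Suc k) = gp x k + (if gp x k + (1/2)^(Suc k) \<le> x then (1/2)^(Suc k) else 0)"

definition gs :: "real \<Rightarrow> nat \<Rightarrow> nat" where
  "gs x k = (if gp x k + (1/2)^(Suc k) \<le> x then 1 else 0)"

lemma hk_gs: "hk k (gs x) = gp x k"
proof (induction k)
  case 0
  show ?case by (simp add: hk_def)
next
  case (Suc k)
  have "hk (Suc k) (gs x) = hk k (gs x) + hterm (gs x) k" by (simp add: hk_def)
  also have "\<dots> = gp x k + hterm (gs x) k" using Suc.IH by simp
  also have "\<dots> = gp x (Suc k)"
  proof (cases "gp x k + (1/2)^(Suc k) \<le> x")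
    case True
    then have "hterm (gs x) k = (1/2)^(Suc k)" by (simp add: hterm_def gs_def bitv_def)
    then show ?thesis using True by (simp only: gp.simps if_True)
  next
    case False
    then have "hterm (gs x) k = 0" by (simp add: hterm_def gs_def bitv_def)
    then show ?thesis using False by (simp only: gp.simps if_False)
  qed
  finally show ?case .
qed

lemma gp_bounds: assumes x: "0 \<le> x" "x \<le> 1" shows "x - (1/2)^k \<le> gp x k \<and> gp x k \<le> x"
proof (induction k)
  case 0
  then show ?case using x by simp
next
  case (Suc k)
  have h: "(1/2::real)^k = 2 * (1/2)^(Suc k)" by simp
  show ?case
  proof (cases "gp x k + (1/2)^(Suc k) \<le> x")
    case True
    then have eq: "gp x (Suc k) = gp x k + (1/2)^(Suc k)" by simp
    show ?thesis using Suc.IH h True unfolding eq by linarith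
  next
    case False
    then have eq: "gp x (Suc k) = gp x k" by simp
    show ?thesis using Suc.IH h False unfolding eq by linarith
  qed
qed

lemma hh_surj: assumes "0 \<le> x" "x \<le> 1" shows "hh (gs x) = x"
proof -
  have lo: "(\<lambda>k. x - (1/2::real)^k) \<longlonglongrightarrow> x - 0"
    by (intro tendsto_diff tendsto_const LIMSEQ_realpow_zero) auto
  have "(\<lambda>k. gp x k) \<longlonglongrightarrow> x"
  proof (rule real_tendsto_sandwich[OF _ _ lo[simplified] tendsto_const])
    show "\<forall>\<^sub>F k in sequentially. x - (1/2)^k \<le> gp x k" using gp_bounds[OF assms] by simp
    show "\<forall>\<^sub>F k in sequentially. gp x k \<le> x" using gp_bounds[OF assms] by simp
  qed
  then have "(\<lambda>k. hk k (gs x)) \<longlonglongrightarrow> x" by (simp add: hk_gs)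
  then show ?thesis using hk_lim LIMSEQ_unique by blast
qed

section \<open>Baire class one\<close>

definition ramp :: "nat \<Rightarrow> real \<Rightarrow> real" where "ramp k t = max 0 (min 1 (real k * t))"

lemma ramp_cont: "continuous_map euclideanreal euclideanreal (ramp k)"
proof -
  have e: "ramp k = (\<lambda>t. max 0 (min 1 (real k * t)))" by (rule ext) (simp add: ramp_def)
  show ?thesis unfolding e continuous_map_iff_continuous2 by (intro continuous_intros)
qed

lemma ramp_nonpos: assumes "t \<le> 0" shows "ramp k t = 0"
proof -
  have "real k * t \<le> 0" using mult_nonneg_nonpos[of "real k" t] assms by simp
  then show ?thesis unfolding ramp_def by simp
qed

lemma ramp_lim: assumes v: "v \<longlonglongrightarrow> l" and l: "l > 0" shows "(\<lambda>k. ramp k (v k)) \<longlonglongrightarrow> 1"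
proof (rule tendsto_eventually)
  have "l/2 < l" using l by simp
  then have e1: "eventually (\<lambda>k. l/2 < v k) sequentially" by (rule order_tendstoD(1)[OF v])
  obtain N :: nat where N: "2/l < real N" using reals_Archimedean2 by blast
  have e2: "eventually (\<lambda>k. N \<le> k) sequentially" by (rule eventually_ge_at_top)
  show "eventually (\<lambda>k. ramp k (v k) = 1) sequentially"
    using e1 e2
  proof (rule eventually_elim2)
    fix k assume vk: "l/2 < v k" and Nk: "N \<le> k"
    then have "real N \<le> real k" by simp
    have "1 = (2/l) * (l/2)" using l by simp
    also have "\<dots> < real N * (l/2)" using N l by (intro mult_strict_right_mono) auto
    also have "\<dots> \<le> real k * (l/2)" using \<open>real N \<le> real k\<close> l by (intro mult_right_mono) auto
    also have "\<dots> \<le> real k * v k" using vk by (intro mult_left_mono) auto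
    finally show "ramp k (v k) = 1" unfolding ramp_def by simp
  qed
qed

definition Lf :: "real \<Rightarrow> (nat \<Rightarrow> nat) \<Rightarrow> real" where "Lf x s = (if hh s < x then 1 else 0)"
definition Rf :: "real \<Rightarrow> (nat \<Rightarrow> nat) \<Rightarrow> real" where "Rf x s = (if x < hh s then 1 else 0)"

lemma Rf_baire: "Rf x \<in> baire_one"
  unfolding baire_one_def mem_Collect_eq
proof (intro exI conjI allI)
  fix k
  have "continuous_map baire_space euclideanreal (\<lambda>s. hk k s - x)"
    by (intro continuous_map_diff hk_cont) simp
  from continuous_map_compose[OF this ramp_cont]
  show "continuous_map baire_space euclideanreal (\<lambda>s. ramp k (hk k s - x))" unfolding o_def .
next
  fix s
  show "(\<lambda>k. ramp k (hk k s - x)) \<longlonglongrightarrow> Rf x s"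
  proof (cases "x < hh s")
    case True
    have "(\<lambda>k. hk k s - x) \<longlonglongrightarrow> hh s - x" by (intro tendsto_diff hk_lim tendsto_const)
    from ramp_lim[OF this] True show ?thesis unfolding Rf_def by simp
  next
    case False
    have "ramp k (hk k s - x) = 0" for k using hk_le_hh[of k s] False by (intro ramp_nonpos) simp
    then show ?thesis using False unfolding Rf_def by simp
  qed
qed

lemma Lf_baire: "Lf x \<in> baire_one"
  unfolding baire_one_def mem_Collect_eq
proof (intro exI conjI allI)
  fix k
  have "continuous_map baire_space euclideanreal (\<lambda>s. x - (hk k s + (1/2)^k))"
    by (intro continuous_map_diff continuous_map_add hk_cont) simp_all
  from continuous_map_compose[OF this ramp_cont]
  show "continuous_map baire_space euclideanreal (\<lambda>s. ramp k (x - (hk k s + (1/2)^k)))" unfolding o_def .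
next
  fix s
  show "(\<lambda>k. ramp k (x - (hk k s + (1/2)^k))) \<longlonglongrightarrow> Lf x s"
  proof (cases "hh s < x")
    case True
    have "(\<lambda>k. x - (hk k s + (1/2::real)^k)) \<longlonglongrightarrow> x - (hh s + 0)"
      by (intro tendsto_diff tendsto_add hk_lim tendsto_const LIMSEQ_realpow_zero) auto
    from ramp_lim[OF this] True show ?thesis unfolding Lf_def by simp
  next
    case False
    have "ramp k (x - (hk k s + (1/2)^k)) = 0" for k using hh_le[of s k] False by (intro ramp_nonpos) simp
    then show ?thesis using False unfolding Lf_def by simp
  qed
qed

lemma baire_comb:
  assumes "f \<in> baire_one" "g \<in> baire_one"
  shows "(\<lambda>s. f s + c * (1 - f s - g s)) \<in> baire_one"
proof -
  obtain F where F: "\<And>k. continuous_map baire_space euclideanreal (F k)" "\<And>x. (\<lambda>k. F k x) \<longlonglongrightarrow> f x"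
    using assms(1) unfolding baire_one_def by blast
  obtain G where G: "\<And>k. continuous_map baire_space euclideanreal (G k)" "\<And>x. (\<lambda>k. G k x) \<longlonglongrightarrow> g x"
    using assms(2) unfolding baire_one_def by blast
  have "continuous_map baire_space euclideanreal (\<lambda>s. F k s + c * (1 - F k s - G k s))" for k
    by (intro continuous_map_add continuous_map_real_mult continuous_map_diff F G) simp_all
  moreover have "(\<lambda>k. F k x + c * (1 - F k x - G k x)) \<longlonglongrightarrow> f x + c * (1 - f x - g x)" for x
    by (intro tendsto_intros F G)
  ultimately show ?thesis unfolding baire_one_def mem_Collect_eq
    by (intro exI[of _ "\<lambda>k s. F k s + c * (1 - F k s - G k s)"]) blast
qed

section \<open>The embedding\<close>

definition Gv :: "real \<times> nat \<Rightarrow> real \<Rightarrow> real" where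
  "Gv p t = (if t < fst p then 1 else 0) + real (snd p) * (if t = fst p then 1 else 0)"

definition Emb :: "real \<times> nat \<Rightarrow> (nat \<Rightarrow> nat) \<Rightarrow> real" where "Emb p s = Gv p (hh s)"

lemma Emb_baire: "Emb p \<in> baire_one"
proof -
  obtain x i where pe: "p = (x,i)" by (cases p)
  have "Emb p = (\<lambda>s. Lf x s + real i * (1 - Lf x s - Rf x s))"
  proof
    fix s
    consider "hh s < x" | "hh s = x" | "x < hh s" by linarith
    then show "Emb p s = Lf x s + real i * (1 - Lf x s - Rf x s)"
      by cases (auto simp: Emb_def Gv_def Lf_def Rf_def pe)
  qed
  then show ?thesis using baire_comb[OF Lf_baire Rf_baire] by simp
qed

lemma Gv_loc: assumes pC: "p \<in> split_carrier n" shows "\<exists>B\<in>split_nbhds n p. \<forall>q\<in>B. Gv q t = Gv p t"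
proof -
  obtain x i where pe: "p = (x,i)" by (cases p)
  have xI: "0 \<le> x" "x \<le> 1" using pC pe by auto
  consider "i = 0 \<and> x > 0" | "\<not>(i = 0 \<and> x > 0)" "i = 1 \<and> x < 1"
      | "\<not>(i = 0 \<and> x > 0)" "\<not>(i = 1 \<and> x < 1)" by blast
  then show ?thesis
  proof cases
    case 1
    have pe0: "p = (x,0)" using pe 1 by simp
    define z where "z = (if t < x then max 0 t else 0)"
    have zz: "0 \<le> z" "z < x" using 1 unfolding z_def by auto
    have "nb0 n x z \<in> split_nbhds n p" unfolding pe0 using 1 xI zz by (intro nb0_in) auto
    moreover have "\<forall>q\<in>nb0 n x z. Gv q t = Gv p t"
    proof
      fix q assume q: "q \<in> nb0 n x z"
      show "Gv q t = Gv p t"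
      proof (cases "q = (x,0)")
        case True then show ?thesis using pe0 by simp
      next
        case False
        then obtain y j where qe: "q = (y,j)" "z < y" "y < x" using q unfolding nb0_def by auto
        show ?thesis
        proof (cases "t < x")
          case True
          then have "t < y" using qe(2) unfolding z_def by auto
          then show ?thesis using True qe pe0 unfolding Gv_def by auto
        next
          case False
          then show ?thesis using qe pe0 unfolding Gv_def by auto
        qed
      qed
    qed
    ultimately show ?thesis by blast
  next
    case 2
    have pe1: "p = (x,1)" using pe 2 by simp
    define z where "z = (if x < t then min 1 t else 1)"
    have zz: "z \<le> 1" "x < z" using 2 unfolding z_def by auto
    have "nb1 n x z \<in> split_nbhds n p" unfolding pe1 using 2 xI zz by (intro nb1_in) auto
    moreover have "\<forall>q\<in>nb1 n x z. Gv q t = Gv p t"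
    proof
      fix q assume q: "q \<in> nb1 n x z"
      show "Gv q t = Gv p t"
      proof (cases "q = (x,1)")
        case True then show ?thesis using pe1 by simp
      next
        case False
        then obtain y j where qe: "q = (y,j)" "x < y" "y < z" using q unfolding nb1_def by auto
        show ?thesis
        proof (cases "x < t")
          case True
          then have "y < t" using qe(3) unfolding z_def by auto
          then show ?thesis using True qe pe1 unfolding Gv_def by auto
        next
          case False
          then show ?thesis using qe pe1 unfolding Gv_def by auto
        qed
      qed
    qed
    ultimately show ?thesis by blast
  next
    case 3
    have e: "split_nbhds n p = {{(x,i)}}" unfolding pe nbhds_eq using 3 by (simp only: if_False if_not_P)
    show ?thesis unfolding e using pe by simp
  qed
qed

lemma Emb_cont: "continuous_map (split_interval n) pointwise_top Emb"
  unfolding pointwise_top_def continuous_map_componentwise_UNIV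
proof
  fix s
  show "continuous_map (split_interval n) euclideanreal (\<lambda>p. Emb p s)"
    unfolding Emb_def by (rule loc_const_cont) (rule Gv_loc)
qed

lemma Gv_inj:
  assumes "p \<in> split_carrier n" "q \<in> split_carrier n" "\<And>t. t \<in> {0..1} \<Longrightarrow> Gv p t = Gv q t"
  shows "p = q"
proof -
  obtain x i where pe: "p = (x,i)" by (cases p)
  obtain y j where qe: "q = (y,j)" by (cases q)
  have xI: "0 \<le> x" "x \<le> 1" "0 \<le> y" "y \<le> 1" using assms(1,2) pe qe by auto
  have H: "\<And>t. t \<in> {0..1} \<Longrightarrow> Gv (x,i) t = Gv (y,j) t" using assms(3) pe qe by simp
  have neq: False if "a < b" "a \<in> {0..1}" "b \<in> {0..1}"
      "\<And>t. t \<in> {0..1} \<Longrightarrow> Gv (a,k) t = Gv (b,l) t" for a b k l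
  proof -
    have "Gv (a,k) a = Gv (b,l) a" using that by simp
    then have k1: "real k = 1" using that(1) unfolding Gv_def by simp
    have m: "(a+b)/2 \<in> {0..1}" using that by auto
    have "Gv (a,k) ((a+b)/2) = Gv (b,l) ((a+b)/2)" using that(4)[OF m] .
    then show False using that(1) unfolding Gv_def by simp
  qed
  consider "x < y" | "y < x" | "x = y" by linarith
  then show ?thesis
  proof cases
    case 1 then show ?thesis using neq[of x y i j] xI H by auto
  next
    case 2 then show ?thesis using neq[of y x j i] xI H by (metis atLeastAtMost_iff)
  next
    case 3
    have "Gv (x,i) x = Gv (y,j) x" using H xI by simp
    then have "i = j" using 3 unfolding Gv_def by simp
    then show ?thesis using 3 pe qe by simp
  qed
qed

lemma Emb_inj: "inj_on Emb (split_carrier n)"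
proof (rule inj_onI)
  fix p q assume p: "p \<in> split_carrier n" and q: "q \<in> split_carrier n" and e: "Emb p = Emb q"
  show "p = q"
  proof (rule Gv_inj[OF p q])
    fix t :: real assume t: "t \<in> {0..1}"
    have "Emb p (gs t) = Emb q (gs t)" using e by simp
    then show "Gv p t = Gv q t" unfolding Emb_def using hh_surj[of t] t by simp
  qed
qed

lemma rosenthal: assumes n2: "n \<ge> 2" shows "rosenthal_compactum (split_interval n)"
  unfolding rosenthal_compactum_def
proof (intro exI conjI)
  show "Emb ` split_carrier n \<subseteq> baire_one" using Emb_baire by blast
  have cpt: "compactin (split_interval n) (split_carrier n)"
    using compact_split[OF n2] unfolding compact_space_def topspace_split .
  show "compactin pointwise_top (Emb ` split_carrier n)"
    by (rule image_compactin[OF cpt Emb_cont])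
  have H: "Hausdorff_space pointwise_top"
    unfolding pointwise_top_def Hausdorff_space_product_topology by simp
  have "embedding_map (split_interval n) pointwise_top Emb"
    by (rule continuous_imp_embedding_map[OF Emb_cont compact_split[OF n2] H]) (simp add: Emb_inj)
  from embedding_map_imp_homeomorphic_space[OF this]
  show "split_interval n homeomorphic_space subtopology pointwise_top (Emb ` split_carrier n)"
    by simp
qed

theorem mainTheorem6:
  fixes n :: nat
  assumes "n \<ge> 2"
  shows "rosenthal_compactum (split_interval n) \<and>
         premetric_degree_le (split_interval n) n TYPE(real) \<and>
         \<not> premetric_degree_le (split_interval n) (n - 1) TYPE('b)"
  using rosenthal[OF assms] premetric_n[of n] not_premetric[OF assms] assms by simp

end
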